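(* Let $g$ be of $n^\alpha$ type. Let $X_N$ have distribution $\mathcal P_{N^\beta\varphi}$ for some $\beta>\alpha$ and $\varphi\ge0$. Then for any $r_0<\beta/\alpha$ and $\delta>0$, $$\lim_{N\to\infty}N^{-r_0}\ln P\big[|N^{-\beta/\alpha}X_N-\varphi^{1/\alpha}|\ge\delta\big]=-\infty .$$
   Context: $g:\mathbb N_0\to[0,\infty)$ with $g(n)=0$ iff $n=0$, $|g(n+1)-g(n)|\le g^*$, nondecreasing, $\lim_{n\to\infty}g(n)/n^\alpha=1$ with $\alpha\in(0,1]$. $g(0)!=1$, $g(n)!=\prod_{i=1}^ng(i)$, $Z(\phi)=\sum_n\phi^n/g(n)!$, $\mathcal P_\phi(n)=\phi^n/(g(n)!Z(\phi))$ for $\phi\ge0$. *)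

theory Defs
  imports "HOL-Analysis.Analysis"
begin

definition n_alpha_type :: "(nat \<Rightarrow> real) \<Rightarrow> real \<Rightarrow> bool" where
  "n_alpha_type g \<alpha> \<longleftrightarrow>
     0 < \<alpha> \<and> \<alpha> \<le> 1 \<and>
     (\<forall>n. g n \<ge> 0) \<and> (\<forall>n. g n = 0 \<longleftrightarrow> n = 0) \<and>
     (\<exists>gstar. \<forall>n. \<bar>g (Suc n) - g n\<bar> \<le> gstar) \<and>
     mono g \<and>
     ((\<lambda>n. g n / (real n powr \<alpha>)) \<longlonglongrightarrow> 1)"

definition gfact :: "(nat \<Rightarrow> real) \<Rightarrow> nat \<Rightarrow> real" where
  "gfact g n = (\<Prod>i=1..n. g i)"

definition Zpart :: "(nat \<Rightarrow> real) \<Rightarrow> real \<Rightarrow> real" where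
  "Zpart g \<phi> = (\<Sum>n. \<phi> ^ n / gfact g n)"

definition Pdist :: "(nat \<Rightarrow> real) \<Rightarrow> real \<Rightarrow> nat \<Rightarrow> real" where
  "Pdist g \<phi> n = \<phi> ^ n / (gfact g n * Zpart g \<phi>)"

definition Pevent :: "(nat \<Rightarrow> real) \<Rightarrow> real \<Rightarrow> nat set \<Rightarrow> real" where
  "Pevent g \<phi> A = (\<Sum>n. if n \<in> A then Pdist g \<phi> n else 0)"

definition lnE :: "real \<Rightarrow> ereal" where
  "lnE x = (if x = 0 then -\<infinity> else ereal (ln x))"

end

theory Submission
  imports Defs
begin


lemma gfact_0[simp]: "gfact g 0 = 1" by (simp add: gfact_def)
lemma gfact_Suc: "gfact g (Suc n) = gfact g n * g (Suc n)"
  unfolding gfact_def by (simp add: prod.nat_ivl_Suc' mult.commute)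
lemma gfact_pos: assumes "\<And>n. n > 0 \<Longrightarrow> g n > 0" shows "gfact g n > 0"
  by (induction n) (auto simp: gfact_Suc assms)

lemma T_Suc: assumes "\<And>n. n > 0 \<Longrightarrow> g n > 0"
  shows "\<psi> ^ Suc n / gfact g (Suc n) = (\<psi> ^ n / gfact g n) * (\<psi> / g (Suc n))"
  using assms[of "Suc n"] by (simp add: gfact_Suc)

lemma T_upper:
  assumes gp: "\<And>n. n > 0 \<Longrightarrow> g n > 0" and psi: "\<psi> \<ge> 0" and rho: "\<rho> \<ge> 0"
    and cond: "\<And>i. i > m \<Longrightarrow> \<psi> \<le> \<rho> * g i" and "m \<le> n"
  shows "\<psi> ^ n / gfact g n \<le> \<rho> ^ (n - m) * (\<psi> ^ m / gfact g m)"
  using \<open>m \<le> n\<close>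
proof (induction n rule: dec_induct)
  case base then show ?case by simp
next
  case (step n)
  have g: "g (Suc n) > 0" using gp by simp
  have t0: "\<psi> ^ n / gfact g n \<ge> 0" using psi gfact_pos[of g n, OF gp] by simp
  have r: "\<psi> / g (Suc n) \<le> \<rho>" using cond[of "Suc n"] step g by (simp add: divide_le_eq)
  have "\<psi> ^ Suc n / gfact g (Suc n) = (\<psi> ^ n / gfact g n) * (\<psi> / g (Suc n))"
    by (rule T_Suc[OF gp])
  also have "\<dots> \<le> (\<psi> ^ n / gfact g n) * \<rho>"
    by (rule mult_left_mono[OF r t0])
  also have "\<dots> \<le> \<rho> ^ (n - m) * (\<psi> ^ m / gfact g m) * \<rho>"
    by (rule mult_right_mono[OF step.IH rho])
  also have "\<dots> = \<rho> ^ (Suc n - m) * (\<psi> ^ m / gfact g m)"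
    using step by (simp add: Suc_diff_le mult_ac)
  finally show ?case .
qed

lemma T_lower:
  assumes gp: "\<And>n. n > 0 \<Longrightarrow> g n > 0" and psi: "\<psi> > 0" and rho: "\<rho> \<ge> 0"
    and cond: "\<And>i. 0 < i \<Longrightarrow> i \<le> m \<Longrightarrow> g i \<le> \<rho> * \<psi>" and "n \<le> m"
  shows "\<psi> ^ n / gfact g n \<le> \<rho> ^ (m - n) * (\<psi> ^ m / gfact g m)"
  using \<open>n \<le> m\<close>
proof (induction n rule: inc_induct)
  case base then show ?case by simp
next
  case (step n)
  have g: "g (Suc n) > 0" using gp by simp
  have "\<psi> ^ Suc n / gfact g (Suc n) = (\<psi> ^ n / gfact g n) * (\<psi> / g (Suc n))"
    by (rule T_Suc[OF gp])
  then have e: "\<psi> ^ n / gfact g n = (\<psi> ^ Suc n / gfact g (Suc n)) * (g (Suc n) / \<psi>)"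
    using g psi by (simp add: field_simps)
  have t0: "\<psi> ^ Suc n / gfact g (Suc n) \<ge> 0" using psi gfact_pos[of g "Suc n", OF gp] by simp
  have "g (Suc n) / \<psi> \<le> \<rho>" using cond[of "Suc n"] step psi by (simp add: divide_le_eq)
  then have "\<psi> ^ n / gfact g n \<le> (\<psi> ^ Suc n / gfact g (Suc n)) * \<rho>"
    by (subst e, rule mult_left_mono[OF _ t0])
  also have "\<dots> \<le> \<rho> ^ (m - Suc n) * (\<psi> ^ m / gfact g m) * \<rho>"
    by (rule mult_right_mono[OF step.IH rho])
  also have "\<dots> = \<rho> ^ (m - n) * (\<psi> ^ m / gfact g m)"
  proof -
    have "m - n = Suc (m - Suc n)" using step by simp
    then show ?thesis by (simp add: mult_ac)
  qed
  finally show ?case .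
qed

lemma geo_fin:
  fixes \<rho> :: real assumes "0 \<le> \<rho>" "\<rho> < 1" "k \<le> m"
  shows "(\<Sum>n\<le>k. \<rho> ^ (m - n)) \<le> \<rho> ^ (m - k) / (1 - \<rho>)"
  using assms(3)
proof (induction k)
  case 0 then show ?case using assms by (simp add: le_divide_eq mult_left_le)
next
  case (Suc k)
  have "(\<Sum>n\<le>Suc k. \<rho> ^ (m - n)) \<le> \<rho> ^ (m - k) / (1 - \<rho>) + \<rho> ^ (m - Suc k)"
    using Suc by simp
  also have "\<rho> ^ (m - k) = \<rho> * \<rho> ^ (m - Suc k)" using Suc(2)
    by (metis Suc_diff_Suc Suc_le_lessD power_Suc)
  also have "\<rho> * \<rho> ^ (m - Suc k) / (1 - \<rho>) + \<rho> ^ (m - Suc k) = \<rho> ^ (m - Suc k) / (1 - \<rho>)"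
    using assms by (simp add: field_simps)
  finally show ?case .
qed


lemma real_pow_lim: "p > 0 \<Longrightarrow> filterlim (\<lambda>n::nat. real n powr p) at_top sequentially"
  by (rule filterlim_compose[OF real_powr_at_top filterlim_real_sequentially])

lemma Z_summable:
  assumes gp: "\<And>n. n > 0 \<Longrightarrow> g n > 0" and lim: "(\<lambda>n. g n / (real n powr \<alpha>)) \<longlonglongrightarrow> 1"
    and al: "\<alpha> > 0" and psi: "\<psi> \<ge> 0"
  shows "summable (\<lambda>n. \<psi> ^ n / gfact g n)"
proof -
  have e1: "eventually (\<lambda>n. g n / (real n powr \<alpha>) > 1/2) sequentially"
    using order_tendstoD(1)[OF lim, of "1/2"] by simp
  have e2: "eventually (\<lambda>n. real n powr \<alpha> \<ge> 4 * \<psi>) sequentially"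
    using real_pow_lim[OF al] by (simp add: filterlim_at_top)
  have e3: "eventually (\<lambda>n. n > 0) sequentially" by (simp add: eventually_gt_at_top)
  have "eventually (\<lambda>n. g n \<ge> 2 * \<psi>) sequentially"
  proof (rule eventually_mono[OF eventually_conj[OF e1 eventually_conj[OF e2 e3]]])
    fix n assume h: "g n / real n powr \<alpha> > 1/2 \<and> real n powr \<alpha> \<ge> 4 * \<psi> \<and> n > 0"
    then have pp: "real n powr \<alpha> > 0" by simp
    have "1/2 * real n powr \<alpha> < (g n / real n powr \<alpha>) * real n powr \<alpha>"
      using h pp by (intro mult_strict_right_mono) auto
    then have "g n > real n powr \<alpha> / 2" using pp by simp
    then show "g n \<ge> 2 * \<psi>" using h by linarith
  qed
  then obtain N0 where N0: "\<And>n. n \<ge> N0 \<Longrightarrow> g n \<ge> 2 * \<psi>" by (auto simp: eventually_sequentially)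
  show ?thesis
  proof (rule summable_ratio_test[of "1/2" N0])
    fix n assume "N0 \<le> n"
    then have gs: "g (Suc n) \<ge> 2 * \<psi>" using N0 by simp
    have gp1: "g (Suc n) > 0" using gp by simp
    have t0: "\<psi> ^ n / gfact g n \<ge> 0" using psi gfact_pos[of g n, OF gp] by simp
    have "\<psi> / g (Suc n) \<le> 1/2" using gs gp1 by (simp add: field_simps)
    then have c1: "(\<psi> ^ n / gfact g n) * (\<psi> / g (Suc n)) \<le> (\<psi> ^ n / gfact g n) * (1/2)"
      by (rule mult_left_mono[OF _ t0])
    have c2: "\<psi> ^ Suc n / gfact g (Suc n) \<ge> 0" using psi gfact_pos[of g "Suc n", OF gp] by simp
    show "norm (\<psi> ^ Suc n / gfact g (Suc n)) \<le> 1/2 * norm (\<psi> ^ n / gfact g n)"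
    proof -
      have a: "norm (\<psi> ^ Suc n / gfact g (Suc n)) = \<psi> ^ Suc n / gfact g (Suc n)"
        using c2 by (simp only: real_norm_def abs_of_nonneg)
      have b: "norm (\<psi> ^ n / gfact g n) = \<psi> ^ n / gfact g n" using t0 by (simp only: real_norm_def abs_of_nonneg)
      have "\<psi> ^ Suc n / gfact g (Suc n) \<le> (\<psi> ^ n / gfact g n) * (1/2)"
        using order_trans[OF eq_refl[OF T_Suc[of g \<psi> n, OF gp]] c1] .
      then show ?thesis unfolding a b by (simp only: mult.commute)
    qed
  qed simp
qed

lemma final_step:
  fixes P :: "nat \<Rightarrow> real"
  assumes ev: "eventually (\<lambda>N. P N \<le> K * exp (- \<kappa> * real N powr p)) sequentially"
    and P0: "\<And>N. P N \<ge> 0" and pr: "p > r0" and kp: "\<kappa> > 0" and Kp: "K > 0" and pp: "p > 0"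
  shows "((\<lambda>N. ereal (real N powr (-r0)) * lnE (P N)) \<longlongrightarrow> -\<infinity>) sequentially"
  unfolding tendsto_MInfty
proof
  fix r :: real
  have l1: "filterlim (\<lambda>n::nat. real n powr p) at_top sequentially" by (rule real_pow_lim[OF pp])
  have l2: "filterlim (\<lambda>n::nat. real n powr (p - r0)) at_top sequentially" by (rule real_pow_lim) (use pr in simp)
  have e1: "eventually (\<lambda>N. ln K \<le> \<kappa> / 2 * real N powr p) sequentially"
    using l1 kp unfolding filterlim_at_top
    by (auto elim!: allE[of _ "ln K / (\<kappa> / 2)"] elim: eventually_mono simp: field_simps)
  have e2: "eventually (\<lambda>N. - (\<kappa> / 2) * real N powr (p - r0) < r) sequentially"
    using l2 kp unfolding filterlim_at_top_dense
    by (auto elim!: allE[of _ "- r / (\<kappa> / 2)"] elim: eventually_mono simp: field_simps)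
  have e3: "eventually (\<lambda>N. N > (0::nat)) sequentially" by (simp add: eventually_gt_at_top)
  show "eventually (\<lambda>N. ereal (real N powr (-r0)) * lnE (P N) < ereal r) sequentially"
  proof (rule eventually_mono[OF eventually_conj[OF ev eventually_conj[OF e1 eventually_conj[OF e2 e3]]]])
    fix N :: nat
    assume h: "P N \<le> K * exp (- \<kappa> * real N powr p) \<and> ln K \<le> \<kappa> / 2 * real N powr p \<and>
       - (\<kappa> / 2) * real N powr (p - r0) < r \<and> N > 0"
    have Np: "real N powr (-r0) > 0" using h by simp
    show "ereal (real N powr (-r0)) * lnE (P N) < ereal r"
    proof (cases "P N = 0")
      case True then show ?thesis using Np by (simp add: lnE_def)
    next
      case False
      then have Ppos: "P N > 0" using P0[of N] by simp
      have "ln (P N) \<le> ln (K * exp (- \<kappa> * real N powr p))"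
        using h Ppos by (subst ln_le_cancel_iff) auto
      also have "\<dots> = ln K - \<kappa> * real N powr p" using Kp by (simp add: ln_mult)
      also have "\<dots> \<le> - (\<kappa> / 2) * real N powr p" using h by simp
      finally have lnP: "ln (P N) \<le> - (\<kappa> / 2) * real N powr p" .
      have "real N powr (-r0) * ln (P N) \<le> real N powr (-r0) * (- (\<kappa> / 2) * real N powr p)"
        using lnP Np by (intro mult_left_mono) auto
      also have "\<dots> = - (\<kappa> / 2) * (real N powr (-r0) * real N powr p)" by simp
      also have "real N powr (-r0) * real N powr p = real N powr (p - r0)"
        by (simp add: powr_add[symmetric])
      finally have "real N powr (-r0) * ln (P N) < r" using h by simp
      then show ?thesis using False by (simp add: lnE_def)
    qed
  qed
qed


lemma key:
  fixes g :: "nat \<Rightarrow> real" and \<alpha> \<beta> \<phi> \<delta> :: real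
  assumes nat: "n_alpha_type g \<alpha>" and be: "\<beta> > 0" and ph: "\<phi> > 0" and de: "\<delta> > 0"
  shows "\<exists>K>0. \<exists>\<kappa>>0. eventually (\<lambda>N. Pevent g (real N powr \<beta> * \<phi>)
                  {n. \<bar>real N powr (- \<beta> / \<alpha>) * real n - \<phi> powr (1 / \<alpha>)\<bar> \<ge> \<delta>}
             \<le> K * exp (- \<kappa> * real N powr (\<beta> / \<alpha>))) sequentially"
proof -
  have al: "\<alpha> > 0" and g0: "\<And>n. g n \<ge> 0" and gz: "\<And>n. g n = 0 \<longleftrightarrow> n = 0" and mg: "mono g"
    and lim: "(\<lambda>n. g n / (real n powr \<alpha>)) \<longlonglongrightarrow> 1"
    using nat unfolding n_alpha_type_def by auto
  have gp: "\<And>n. n > 0 \<Longrightarrow> g n > 0" using g0 gz by (metis less_eq_real_def not_less0 neq0_conv)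
  define c where "c = \<phi> powr (1/\<alpha>)"
  have cpos: "c > 0" using ph by (simp add: c_def)
  have cpow: "c powr \<alpha> = \<phi>" using ph al by (simp add: c_def powr_powr)
  define a where "a = c + \<delta>/2"
  define a' where "a' = max (c - \<delta>/2) (c/2)"
  define \<epsilon> where "\<epsilon> = min (\<delta>/2) (c/2)"
  have apos: "a > 0" and ac: "a > c" using cpos de by (auto simp: a_def)
  have a'pos: "a' > 0" and a'c: "a' < c" and a'a: "a' \<le> a" using cpos de by (auto simp: a'_def a_def)
  have epos: "\<epsilon> > 0" using cpos de by (simp add: \<epsilon>_def)
  have apow: "a powr \<alpha> > \<phi>" using powr_less_mono2[OF al _ ac] cpos cpow by simp
  have a'pow: "a' powr \<alpha> < \<phi>" using powr_less_mono2[OF al _ a'c] a'pos cpow by simp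
  have a'pow0: "a' powr \<alpha> > 0" using a'pos by simp
  have apow0: "a powr \<alpha> > 0" using apos by simp
  define q1 where "q1 = (\<phi> / a powr \<alpha> + 1) / 2"
  define q2 where "q2 = (a' powr \<alpha> / \<phi> + 1) / 2"
  define \<rho> where "\<rho> = max q1 q2"
  have q1: "0 < q1" "q1 < 1" using apow apow0 ph by (auto simp: q1_def field_simps)
  have "a' powr \<alpha> / \<phi> < 1" "a' powr \<alpha> / \<phi> > 0" using a'pow a'pow0 ph by auto
  then have q2: "0 < q2" "q2 < 1" unfolding q2_def by auto
  have rho: "0 < \<rho>" "\<rho> < 1" "q1 \<le> \<rho>" "q2 \<le> \<rho>" using q1 q2 by (auto simp: \<rho>_def)
  define t1 where "t1 = \<phi> / (q1 * a powr \<alpha>)"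
  define t2 where "t2 = q2 * \<phi> / a' powr \<alpha>"
  have "q1 * a powr \<alpha> = (\<phi> + a powr \<alpha>) / 2" using apow0 by (simp add: q1_def field_simps)
  then have "q1 * a powr \<alpha> > \<phi>" using apow by (simp add: field_simps)
  then have t1: "t1 < 1" using ph by (simp add: t1_def divide_less_eq)
  have t2: "t2 > 1" using a'pow a'pow0 ph by (simp add: t2_def q2_def field_simps)
  have t1e: "q1 * t1 * a powr \<alpha> = \<phi>" using q1 apow apos ph by (simp add: t1_def)
  have t2e: "t2 * a' powr \<alpha> = q2 * \<phi>" using a'pow0 by (simp add: t2_def)
  have "eventually (\<lambda>n. t1 < g n / real n powr \<alpha> \<and> g n / real n powr \<alpha> < t2) sequentially"
    using order_tendstoD(1)[OF lim t1] order_tendstoD(2)[OF lim t2] by (rule eventually_conj)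
  then obtain n0 where n0: "\<And>n. n \<ge> n0 \<Longrightarrow> t1 < g n / real n powr \<alpha> \<and> g n / real n powr \<alpha> < t2"
    by (auto simp: eventually_sequentially)
  define K where "K = 2 / ((1 - \<rho>) * \<rho>)"
  define \<kappa> where "\<kappa> = - ln \<rho> * \<epsilon>"
  have Kpos: "K > 0" using rho by (simp add: K_def)
  have "ln \<rho> < 0" using rho by simp
  then have kpos: "\<kappa> > 0" using epos by (simp add: \<kappa>_def mult_neg_pos)
  have bp: "\<beta> / \<alpha> > 0" using be al by simp
  have evM: "eventually (\<lambda>N. real N powr (\<beta>/\<alpha>) \<ge> (real n0 + 1) / a') sequentially"
    using real_pow_lim[OF bp] by (simp add: filterlim_at_top)
  have evN: "eventually (\<lambda>N. N > (0::nat)) sequentially" by (simp add: eventually_gt_at_top)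
  show ?thesis
  proof (rule exI[of _ K], rule conjI[OF Kpos], rule exI[of _ \<kappa>], rule conjI[OF kpos], rule eventually_mono[OF eventually_conj[OF evM evN]])
    fix N :: nat
    assume hN: "(real n0 + 1) / a' \<le> real N powr (\<beta> / \<alpha>) \<and> 0 < N"
    define M where "M = real N powr (\<beta> / \<alpha>)"
    define \<psi> where "\<psi> = real N powr \<beta> * \<phi>"
    define A where "A = {n. \<bar>real N powr (- \<beta> / \<alpha>) * real n - \<phi> powr (1 / \<alpha>)\<bar> \<ge> \<delta>}"
    have Mpos: "M > 0" using hN by (simp add: M_def)
    have a'M: "a' * M \<ge> real n0 + 1" using hN a'pos by (simp add: M_def field_simps)
    have psipos: "\<psi> > 0" using hN ph by (simp add: \<psi>_def)
    have MA: "M powr \<alpha> = real N powr \<beta>" using al by (simp add: M_def powr_powr)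
    have psiM: "\<psi> = \<phi> * M powr \<alpha>" by (simp add: MA \<psi>_def)
    define T where "T n = \<psi> ^ n / gfact g n" for n
    have T0: "T n \<ge> 0" for n using psipos gfact_pos[of g n, OF gp] by (simp add: T_def)
    have summ: "summable T" unfolding T_def using Z_summable[OF gp lim al] psipos by simp
    have Zdef: "Zpart g \<psi> = suminf T" unfolding Zpart_def T_def by (rule refl)
    have Zge: "T m \<le> Zpart g \<psi>" for m
      using sum_le_suminf[OF summ, of "{m}"] T0 by (simp add: Zdef)
    have Zpos: "Zpart g \<psi> > 0" using Zge[of 0] by (simp add: T_def)
    have Pd: "Pdist g \<psi> n = T n / Zpart g \<psi>" for n by (simp add: Pdist_def T_def)
    define m1 where "m1 = nat \<lceil>a * M\<rceil>"
    define m2 where "m2 = nat \<lfloor>a' * M\<rfloor>"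
    define nlo where "nlo = nat \<lfloor>(c - \<delta>) * M\<rfloor>"
    define nhi where "nhi = nat \<lceil>(c + \<delta>) * M\<rceil>"
    have aM: "a' * M \<le> a * M" using a'a Mpos by (simp add: mult_right_mono)
    have m1a: "real m1 \<ge> a * M" "real m1 < a * M + 1" using apos Mpos unfolding m1_def
      by (auto simp: of_nat_nat) (linarith)
    have m2a: "real m2 \<le> a' * M" "real m2 > a' * M - 1" using a'pos Mpos unfolding m2_def
      by (auto simp: of_nat_nat)
    have m1n0: "m1 \<ge> n0" using m1a aM a'M by linarith
    have m2n0: "m2 \<ge> n0" "m2 > 0" using m2a a'M by linarith+
    have upc: "\<psi> \<le> \<rho> * g i" if "i > m1" for i
    proof -
      have "a * M > 0" using apos Mpos by simp
      then have "real m1 > 0" using m1a by linarith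
      then have m1p: "real m1 powr \<alpha> > 0" by simp
      have "t1 * real m1 powr \<alpha> < g m1 / real m1 powr \<alpha> * real m1 powr \<alpha>"
        using n0[OF m1n0] m1p by (intro mult_strict_right_mono) auto
      then have gm1: "t1 * real m1 powr \<alpha> < g m1" using m1p by simp
      have "(a * M) powr \<alpha> \<le> real m1 powr \<alpha>" using m1a apos Mpos al
        by (intro powr_mono2) auto
      then have "a powr \<alpha> * M powr \<alpha> \<le> real m1 powr \<alpha>" using apos Mpos by (simp add: powr_mult)
      then have "t1 * (a powr \<alpha> * M powr \<alpha>) \<le> t1 * real m1 powr \<alpha>"
        using t1e q1 ph apow by (intro mult_left_mono) (auto simp: t1_def)
      then have "t1 * (a powr \<alpha> * M powr \<alpha>) \<le> g i"
        using gm1 monoD[OF mg, of m1 i] that by linarith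
      then have "q1 * (t1 * (a powr \<alpha> * M powr \<alpha>)) \<le> q1 * g i" using q1 by simp
      also have "\<dots> \<le> \<rho> * g i" using rho g0[of i] by (intro mult_right_mono) auto
      finally have "q1 * (t1 * (a powr \<alpha> * M powr \<alpha>)) \<le> \<rho> * g i" .
      moreover have "q1 * (t1 * (a powr \<alpha> * M powr \<alpha>)) = \<psi>"
        using t1e psiM by (metis mult.assoc mult.commute)
      ultimately show ?thesis by simp
    qed
    have loc: "g i \<le> \<rho> * \<psi>" if "0 < i" "i \<le> m2" for i
    proof -
      have m2p: "real m2 powr \<alpha> > 0" using m2n0 by simp
      have "g m2 / real m2 powr \<alpha> * real m2 powr \<alpha> < t2 * real m2 powr \<alpha>"
        using n0[OF m2n0(1)] m2p by (intro mult_strict_right_mono) auto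
      then have gm2: "g m2 < t2 * real m2 powr \<alpha>" using m2p by simp
      have "real m2 powr \<alpha> \<le> (a' * M) powr \<alpha>" using m2a al by (intro powr_mono2) auto
      then have "real m2 powr \<alpha> \<le> a' powr \<alpha> * M powr \<alpha>" using a'pos Mpos by (simp add: powr_mult)
      then have "t2 * real m2 powr \<alpha> \<le> t2 * (a' powr \<alpha> * M powr \<alpha>)"
        using t2 by (intro mult_left_mono) auto
      also have "\<dots> = q2 * \<psi>" using t2e psiM by (simp add: mult_ac)
      also have "\<dots> \<le> \<rho> * \<psi>" using rho psipos by (intro mult_right_mono) auto
      finally show ?thesis using gm2 monoD[OF mg, of i m2] that by linarith
    qed
    have nlo_m2: "nlo \<le> m2" unfolding nlo_def m2_def
      using Mpos a'_def de by (intro nat_mono floor_mono mult_right_mono) auto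
    have m1_nhi: "m1 \<le> nhi" unfolding m1_def nhi_def
      using Mpos a_def de by (intro nat_mono ceiling_mono mult_right_mono) auto
    have inv: "real N powr (- \<beta> / \<alpha>) = 1 / M" by (simp add: M_def powr_minus divide_inverse)
    have split: "n \<le> nlo \<or> nhi \<le> n" if "n \<in> A" for n
    proof -
      have inv': "real N powr (- (\<beta> / \<alpha>)) = 1 / M" using inv by simp
      have "\<bar>real n / M - c\<bar> \<ge> \<delta>" using that by (simp add: A_def inv' c_def)
      then have "real n / M \<ge> c + \<delta> \<or> real n / M \<le> c - \<delta>" by linarith
      then have "real n \<ge> (c + \<delta>) * M \<or> real n \<le> (c - \<delta>) * M" using Mpos
        by (auto simp: field_simps)
      then show ?thesis unfolding nlo_def nhi_def
        by (metis le_nat_floor nat_ceiling_le_eq of_nat_nat floor_of_nat le_floor_iff le_nat_iff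
            ceiling_le_iff)
    qed
    have Pup: "Pdist g \<psi> n \<le> \<rho> ^ (n - m1)" if "nhi \<le> n" for n
    proof -
      have "T n \<le> \<rho> ^ (n - m1) * T m1" unfolding T_def
        using T_upper[of g \<psi> \<rho> m1 n, OF gp _ _ upc] psipos rho m1_nhi that by auto
      also have "\<dots> \<le> \<rho> ^ (n - m1) * Zpart g \<psi>" using Zge[of m1] rho by (intro mult_left_mono) auto
      finally show ?thesis using Zpos by (simp add: Pd divide_le_eq)
    qed
    have Plo: "Pdist g \<psi> n \<le> \<rho> ^ (m2 - n)" if "n \<le> nlo" for n
    proof -
      have "T n \<le> \<rho> ^ (m2 - n) * T m2" unfolding T_def
        using T_lower[of g \<psi> \<rho> m2 n, OF gp psipos _ loc] rho nlo_m2 that by auto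
      also have "\<dots> \<le> \<rho> ^ (m2 - n) * Zpart g \<psi>" using Zge[of m2] rho by (intro mult_left_mono) auto
      finally show ?thesis using Zpos by (simp add: Pd divide_le_eq)
    qed
    define h where "h n = (if n \<in> A then Pdist g \<psi> n else 0)" for n
    define B1 where "B1 n = (if n \<in> {..nlo} then \<rho> ^ (m2 - n) else 0)" for n
    define B2 where "B2 n = (if nhi \<le> n then \<rho> ^ (n - m1) else 0)" for n
    have h0: "h n \<ge> 0" for n using T0[of n] Zpos by (simp add: h_def Pd)
    have hB: "h n \<le> B1 n + B2 n" for n
    proof -
      have b1: "B1 n \<ge> 0" "B2 n \<ge> 0" using rho by (auto simp: B1_def B2_def)
      show ?thesis
      proof (cases "n \<in> A")
        case True
        show ?thesis
        proof (cases "n \<le> nlo")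
          case True
          then have "h n \<le> B1 n" using Plo[of n] \<open>n \<in> A\<close> by (simp add: h_def B1_def)
          then show ?thesis using b1 by linarith
        next
          case False
          then have "nhi \<le> n" using split[OF \<open>n \<in> A\<close>] by simp
          then have "h n \<le> B2 n" using Pup[of n] \<open>n \<in> A\<close> by (simp add: h_def B2_def)
          then show ?thesis using b1 by linarith
        qed
      next
        case False then show ?thesis using b1 by (simp add: h_def)
      qed
    qed
    have s1: "B1 sums (\<Sum>n\<le>nlo. \<rho> ^ (m2 - n))" unfolding B1_def by (rule sums_If_finite_set) simp
    have "(\<lambda>i. \<rho> ^ (nhi - m1) * \<rho> ^ i) sums (\<rho> ^ (nhi - m1) * (1 / (1 - \<rho>)))"
      using geometric_sums[of \<rho>] rho by (intro sums_mult) auto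
    moreover have "B2 (i + nhi) = \<rho> ^ (nhi - m1) * \<rho> ^ i" for i
    proof -
      have "i + nhi - m1 = (nhi - m1) + i" using m1_nhi by simp
      then show ?thesis by (simp add: B2_def power_add)
    qed
    ultimately have "(\<lambda>i. B2 (i + nhi)) sums (\<rho> ^ (nhi - m1) / (1 - \<rho>))" by simp
    then have s2: "B2 sums (\<rho> ^ (nhi - m1) / (1 - \<rho>))"
      by (subst (asm) sums_zero_iff_shift) (auto simp: B2_def)
    have s: "(\<lambda>n. B1 n + B2 n) sums ((\<Sum>n\<le>nlo. \<rho> ^ (m2 - n)) + \<rho> ^ (nhi - m1) / (1 - \<rho>))"
      by (rule sums_add[OF s1 s2])
    have "Pevent g \<psi> A = suminf h" unfolding Pevent_def h_def[abs_def] by (rule refl)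
    also have "\<dots> \<le> suminf (\<lambda>n. B1 n + B2 n)"
    proof (rule suminf_le)
      show "summable (\<lambda>n. B1 n + B2 n)" using s by (simp add: sums_iff)
      then show "summable h" using h0 hB by (intro summable_comparison_test[of h "\<lambda>n. B1 n + B2 n"]) auto
    qed (use hB in auto)
    also have "\<dots> = (\<Sum>n\<le>nlo. \<rho> ^ (m2 - n)) + \<rho> ^ (nhi - m1) / (1 - \<rho>)"
      using s by (simp add: sums_iff)
    also have "\<dots> \<le> \<rho> ^ (m2 - nlo) / (1 - \<rho>) + \<rho> ^ (nhi - m1) / (1 - \<rho>)"
      using geo_fin[of \<rho> nlo m2] rho nlo_m2 by simp
    finally have P1: "Pevent g \<psi> A \<le> \<rho> ^ (m2 - nlo) / (1 - \<rho>) + \<rho> ^ (nhi - m1) / (1 - \<rho>)" .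
    have nloR: "real nlo \<le> max 0 ((c - \<delta>) * M)" unfolding nlo_def by linarith
    have f1: "(c - \<delta>/2) * M \<le> a' * M" "(c/2) * M \<le> a' * M" "\<epsilon> * M \<le> (\<delta>/2) * M" "\<epsilon> * M \<le> (c/2) * M"
    proof -
      have "c - \<delta>/2 \<le> a'" "c/2 \<le> a'" "\<epsilon> \<le> \<delta>/2" "\<epsilon> \<le> c/2" by (simp_all add: a'_def \<epsilon>_def)
      then show "(c - \<delta>/2) * M \<le> a' * M" "(c/2) * M \<le> a' * M" "\<epsilon> * M \<le> (\<delta>/2) * M" "\<epsilon> * M \<le> (c/2) * M"
        using Mpos by (auto intro!: mult_right_mono)
    qed
    have L1: "real (m2 - nlo) \<ge> \<epsilon> * M - 1"
      using nloR m2a f1 nlo_m2 by (auto simp: of_nat_diff algebra_simps)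
    have nhiR: "real nhi \<ge> (c + \<delta>) * M" unfolding nhi_def by linarith
    have L2: "real (nhi - m1) \<ge> \<epsilon> * M - 1"
      using nhiR m1a f1 m1_nhi by (auto simp: of_nat_diff algebra_simps a_def)
    have pw: "\<rho> ^ k \<le> \<rho> powr (\<epsilon> * M - 1)" if "real k \<ge> \<epsilon> * M - 1" for k
    proof -
      have "\<rho> ^ k = \<rho> powr real k" using rho by (simp add: powr_realpow)
      also have "\<dots> \<le> \<rho> powr (\<epsilon> * M - 1)" using rho that by (intro powr_mono') auto
      finally show ?thesis .
    qed
    have ex: "\<rho> powr (\<epsilon> * M - 1) = exp (- \<kappa> * M) / \<rho>"
    proof -
      have "\<rho> powr (\<epsilon> * M - 1) = \<rho> powr (\<epsilon> * M) / \<rho> powr 1" by (rule powr_diff)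
      also have "\<rho> powr (\<epsilon> * M) = exp (- \<kappa> * M)" using rho by (simp add: powr_def \<kappa>_def mult_ac)
      finally show ?thesis using rho by simp
    qed
    have "Pevent g \<psi> A \<le> exp (- \<kappa> * M) / \<rho> / (1 - \<rho>) + exp (- \<kappa> * M) / \<rho> / (1 - \<rho>)"
    proof -
      have "\<rho> ^ (m2 - nlo) / (1 - \<rho>) \<le> exp (- \<kappa> * M) / \<rho> / (1 - \<rho>)"
        using pw[OF L1] rho unfolding ex by (intro divide_right_mono) auto
      moreover have "\<rho> ^ (nhi - m1) / (1 - \<rho>) \<le> exp (- \<kappa> * M) / \<rho> / (1 - \<rho>)"
        using pw[OF L2] rho unfolding ex by (intro divide_right_mono) auto
      ultimately show ?thesis using P1 by linarith
    qed
    also have "\<dots> = K * exp (- \<kappa> * M)" by (simp add: K_def field_simps)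
    finally show "Pevent g (real N powr \<beta> * \<phi>)
                  {n. \<bar>real N powr (- \<beta> / \<alpha>) * real n - \<phi> powr (1 / \<alpha>)\<bar> \<ge> \<delta>}
             \<le> K * exp (- \<kappa> * real N powr (\<beta> / \<alpha>))" by (simp add: \<psi>_def A_def M_def)
  qed
qed

lemma Pevent_nonneg:
  assumes gp: "\<And>n. n > 0 \<Longrightarrow> g n > 0" and lim: "(\<lambda>n. g n / (real n powr \<alpha>)) \<longlonglongrightarrow> 1"
    and al: "\<alpha> > 0" and psi: "\<psi> \<ge> 0"
  shows "Pevent g \<psi> A \<ge> 0"
proof -
  define T where "T n = \<psi> ^ n / gfact g n" for n
  have T0: "T n \<ge> 0" for n using psi gfact_pos[of g n, OF gp] by (simp add: T_def)
  have summ: "summable T" unfolding T_def using Z_summable[OF gp lim al psi] .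
  have Z0: "Zpart g \<psi> \<ge> 0" unfolding Zpart_def using suminf_nonneg[OF summ T0] by (simp add: T_def)
  have "0 \<le> (\<Sum>n. if n \<in> A then Pdist g \<psi> n else 0)"
  proof (rule suminf_nonneg)
    have s2: "summable (\<lambda>n. T n / Zpart g \<psi>)" using summ by (rule summable_divide)
    have Pd: "Pdist g \<psi> n = T n / Zpart g \<psi>" for n by (simp add: Pdist_def T_def)
    have hb: "norm (if n \<in> A then Pdist g \<psi> n else 0) \<le> T n / Zpart g \<psi>" for n
      using T0[of n] Z0 by (auto simp: Pd)
    show "summable (\<lambda>n. if n \<in> A then Pdist g \<psi> n else 0)"
      by (rule summable_comparison_test[OF _ s2]) (use hb in blast)
    show "\<And>n. 0 \<le> (if n \<in> A then Pdist g \<psi> n else 0)"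
      using T0 Z0 by (auto simp: Pd)
  qed
  then show ?thesis by (simp add: Pevent_def)
qed

theorem mainTheorem13:
  fixes g :: "nat \<Rightarrow> real" and \<alpha> \<beta> \<phi> r0 \<delta> :: real
  assumes "n_alpha_type g \<alpha>" and "\<beta> > \<alpha>" and "\<phi> \<ge> 0"
    and "r0 < \<beta> / \<alpha>" and "\<delta> > 0"
  shows "((\<lambda>N::nat. ereal (real N powr (- r0)) *
            lnE (Pevent g (real N powr \<beta> * \<phi>)
                  {n. \<bar>real N powr (- \<beta> / \<alpha>) * real n - \<phi> powr (1 / \<alpha>)\<bar> \<ge> \<delta>}))
          \<longlongrightarrow> -\<infinity>) sequentially"
proof -
  have al: "\<alpha> > 0" and g0: "\<And>n. g n \<ge> 0" and gz: "\<And>n. g n = 0 \<longleftrightarrow> n = 0"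
    and lim: "(\<lambda>n. g n / (real n powr \<alpha>)) \<longlonglongrightarrow> 1"
    using assms(1) unfolding n_alpha_type_def by auto
  have gp: "\<And>n. n > 0 \<Longrightarrow> g n > 0" using g0 gz by (metis less_eq_real_def not_less0 neq0_conv)
  have be: "\<beta> > 0" using al assms(2) by simp
  show ?thesis
  proof (cases "\<phi> = 0")
    case True
    have P0: "Pevent g (real N powr \<beta> * \<phi>)
                  {n. \<bar>real N powr (- \<beta> / \<alpha>) * real n - \<phi> powr (1 / \<alpha>)\<bar> \<ge> \<delta>} = 0" for N
    proof -
      have "(\<lambda>n. if n \<in> {n. \<bar>real N powr (- \<beta> / \<alpha>) * real n - \<phi> powr (1 / \<alpha>)\<bar> \<ge> \<delta>}
              then Pdist g (real N powr \<beta> * \<phi>) n else 0) = (\<lambda>n. 0)"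
      proof (rule ext)
        fix n :: nat
        show "(if n \<in> {n. \<bar>real N powr (- \<beta> / \<alpha>) * real n - \<phi> powr (1 / \<alpha>)\<bar> \<ge> \<delta>}
              then Pdist g (real N powr \<beta> * \<phi>) n else 0) = 0"
        proof (cases "n = 0")
          case True
          then show ?thesis using \<open>\<phi> = 0\<close> assms(5) by simp
        next
          case False
          then show ?thesis using \<open>\<phi> = 0\<close> by (simp add: Pdist_def zero_power)
        qed
      qed
      then show ?thesis unfolding Pevent_def by simp
    qed
    show ?thesis unfolding P0 tendsto_MInfty
    proof
      fix r :: real
      show "eventually (\<lambda>N::nat. ereal (real N powr (- r0)) * lnE 0 < ereal r) sequentially"
        using eventually_gt_at_top[of "0::nat"] by (rule eventually_mono) (simp add: lnE_def)
    qed
  next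
    case False
    then have ph: "\<phi> > 0" using assms(3) by simp
    obtain K \<kappa> where K: "K > 0" "\<kappa> > 0" and ev: "eventually (\<lambda>N. Pevent g (real N powr \<beta> * \<phi>)
                  {n. \<bar>real N powr (- \<beta> / \<alpha>) * real n - \<phi> powr (1 / \<alpha>)\<bar> \<ge> \<delta>}
             \<le> K * exp (- \<kappa> * real N powr (\<beta> / \<alpha>))) sequentially"
      using key[OF assms(1) be ph assms(5)] by blast
    show ?thesis
    proof (rule final_step[OF ev _ assms(4) K(2) K(1)])
      show "\<beta> / \<alpha> > 0" using be al by simp
      fix N :: nat
      show "Pevent g (real N powr \<beta> * \<phi>)
                  {n. \<bar>real N powr (- \<beta> / \<alpha>) * real n - \<phi> powr (1 / \<alpha>)\<bar> \<ge> \<delta>} \<ge> 0"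
        using ph by (intro Pevent_nonneg[OF gp lim al] mult_nonneg_nonneg) auto
    qed
  qed
qed

end
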